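(* Let $G$ be a finite group with a fixed supercharacter theory and let $\iota,\alpha\in\mathrm{scf}(G)$ with $\langle\iota,\alpha\rangle=1$; set $\beta=\alpha$. Then the linear character $\alpha_\bullet\rangle$ of $\mathcal{H}_{(\iota,\alpha,\beta)}$ is odd, i.e. $\mathrm{Res}_{\mathcal{H}_n}(\alpha_\bullet\rangle^{-1})=(-1)^n\,\mathrm{Res}_{\mathcal{H}_n}(\alpha_\bullet\rangle)$ for every $n$, where $\mathcal{H}_n=\mathrm{scf}(G^{n-1})$ is the degree-$n$ component.
   Context: Supercharacter theory: set partition $\mathtt{Cl}$ of $G$ and pairwise orthogonal characters $\mathtt{Ch}$ forming a basis of $\mathrm{scf}(G)=\{\psi:G\to\mathbb{C}$ constant on blocks of $\mathtt{Cl}\}$, with $\mathbf{reg}\in\mathrm{scf}(G)$, $\mathbb{1}\in\mathtt{Ch}$; $\langle\psi,\gamma\rangle=|G|^{-1}\sum_g\psi(g)\overline{\gamma(g)}$. For $n\ge1$, $G^{n-1}=G\times\cdots\times G\times\{1\}$ ($n-1$ copies of $G$), $\mathrm{scf}(G^{n-1})$ is spanned by $\psi_1\otimes\cdots\otimes\psi_{n-1}\otimes\chi^{()}:(g_1,\dots,g_{n-1},1)\mapsto\prod\psi_j(g_j)$ ($\chi^{()}$ trivial character of the trivial group), with the usual inner product of $G^{n-1}$; $\mathrm{scf}(G^{-1}):=\mathbb{C}\chi^\emptyset$, $\langle\chi^\emptyset,\chi^\emptyset\rangle=1$. $\mathcal{H}_{(\iota,\alpha,\beta)}=\bigoplus_{n\ge0}\mathrm{scf}(G^{n-1})$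 is the graded connected Hopf algebra with unit $\chi^\emptyset$, product $(\gamma_1\otimes\cdots\otimes\gamma_{m-1}\otimes\chi^{()})\cdot(\psi_1\otimes\cdots\otimes\psi_{n-1}\otimes\chi^{()})=\gamma_1\otimes\cdots\otimes\gamma_{m-1}\otimes\iota\otimes\psi_1\otimes\cdots\otimes\psi_{n-1}\otimes\chi^{()}$, coproduct $\Delta(\psi)=\sum_{A\subseteq[n]}\psi^{A}\otimes\psi^{[n]\setminus A}$ for $\psi=\psi_1\otimes\cdots\otimes\psi_{n-1}\otimes\chi^{()}$, where $\psi^\emptyset=\chi^\emptyset$; for nonempty $A=\{a_1<\dots<a_k\}$, $\psi^{A}=\lambda_A\,x_{a_1}\otimes\cdots\otimes x_{a_{k-1}}\otimes\chi^{()}$ with $x_{a_i}=\psi_{a_i}$ if $a_{i+1}=a_i+1$, else $\langle\psi_{a_i},\alpha\rangle\iota$, and $\lambda_A=\langle\psi_{a_k},\alpha\rangle$ if $a_k<n$, $1$ if $a_k=n$; $\psi^{[n]\setminus A}$ is the same with $\beta$ in place of $\alpha$; counit = projection to degree 0. $\alpha_\bullet\rangle:\mathcal{H}\to\mathbb{C}$ is the linear map $\gamma\mapsto\langle\gamma,\alpha_n\rangle$ on degree $n$, where $\alpha_n=\alpha^{\otimes(n-1)}\otimes\chi^{()}$ and $\alpha_0=\chi^\emptyset$; it is an algebra homomorphism (linear character), and the inverse is taken in the group of linear characters under convolution $\zeta\circ\xi=m_{\mathbb{C}}(\zeta\otimes\xi)\Delta$. *)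

theory Defs
  imports "HOL-Algebra.Group" "HOL-Library.Disjoint_Sets" "Jordan_Normal_Form.Matrix"
begin

definition ip :: "('a, 'b) monoid_scheme \<Rightarrow> ('a \<Rightarrow> complex) \<Rightarrow> ('a \<Rightarrow> complex) \<Rightarrow> complex" where
  "ip G \<psi> \<gamma> = (\<Sum>g\<in>carrier G. \<psi> g * cnj (\<gamma> g)) / of_nat (card (carrier G))"

definition is_character :: "('a, 'b) monoid_scheme \<Rightarrow> ('a \<Rightarrow> complex) \<Rightarrow> bool" where
  "is_character G \<chi> \<longleftrightarrow> (\<exists>(d::nat) (\<rho>::'a \<Rightarrow> complex mat).
      (\<forall>g\<in>carrier G. \<rho> g \<in> carrier_mat d d) \<and>
      (\<forall>g\<in>carrier G. \<forall>h\<in>carrier G. \<rho> (g \<otimes>\<^bsub>G\<^esub> h) = \<rho> g * \<rho> h) \<and>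
      \<rho> \<one>\<^bsub>G\<^esub> = 1\<^sub>m d \<and>
      (\<forall>g\<in>carrier G. \<chi> g = (\<Sum>i<d. \<rho> g $$ (i, i))))"

definition scf :: "('a, 'b) monoid_scheme \<Rightarrow> 'a set set \<Rightarrow> ('a \<Rightarrow> complex) set" where
  "scf G Cl = {\<psi>. \<psi> \<in> extensional (carrier G) \<and> (\<forall>K\<in>Cl. \<forall>g\<in>K. \<forall>h\<in>K. \<psi> g = \<psi> h)}"

definition reg_char :: "('a, 'b) monoid_scheme \<Rightarrow> 'a \<Rightarrow> complex" where
  "reg_char G g = (if g = \<one>\<^bsub>G\<^esub> then of_nat (card (carrier G)) else 0)"

definition triv_char :: "('a, 'b) monoid_scheme \<Rightarrow> 'a \<Rightarrow> complex" where
  "triv_char G g = (if g \<in> carrier G then 1 else 0)"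

definition supercharacter_theory ::
  "('a, 'b) monoid_scheme \<Rightarrow> 'a set set \<Rightarrow> ('a \<Rightarrow> complex) set \<Rightarrow> bool" where
  "supercharacter_theory G Cl Ch \<longleftrightarrow>
     partition_on (carrier G) Cl \<and>
     finite Ch \<and> Ch \<subseteq> scf G Cl \<and>
     (\<forall>\<chi>\<in>Ch. is_character G \<chi>) \<and>
     (\<forall>\<chi>\<in>Ch. \<forall>\<chi>'\<in>Ch. \<chi> \<noteq> \<chi>' \<longrightarrow> ip G \<chi> \<chi>' = 0) \<and>
     (\<forall>c. (\<forall>g. (\<Sum>\<chi>\<in>Ch. c \<chi> * \<chi> g) = 0) \<longrightarrow> (\<forall>\<chi>\<in>Ch. c \<chi> = 0)) \<and>
     (\<forall>\<psi>\<in>scf G Cl. \<exists>c. \<psi> = (\<lambda>g. \<Sum>\<chi>\<in>Ch. c \<chi> * \<chi> g)) \<and>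
     reg_char G \<in> scf G Cl \<and>
     triv_char G \<in> Ch"

text \<open>Elements of G^(n-1) x {1} are encoded as tuples g :: nat => 'a with
  g j in G for j < n-1 (coordinate j+1 of the paper) and g j = 1 for j >= n-1.
  For n = 0 and n = 1 this is a single point, so H_0 = C chi^emptyset and
  H_1 = C chi^().\<close>
definition tup :: "('a, 'b) monoid_scheme \<Rightarrow> nat \<Rightarrow> (nat \<Rightarrow> 'a) set" where
  "tup G n = {g. (\<forall>j<n-1. g j \<in> carrier G) \<and> (\<forall>j. n - 1 \<le> j \<longrightarrow> g j = \<one>\<^bsub>G\<^esub>)}"

text \<open>scf(G^(n-1)): functions on tup G n (zero outside) constant on products of blocks;
  this is exactly the span of the tensors psi_1 (x) ... (x) psi_(n-1) (x) chi^().\<close>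
definition Hn :: "('a, 'b) monoid_scheme \<Rightarrow> 'a set set \<Rightarrow> nat \<Rightarrow> ((nat \<Rightarrow> 'a) \<Rightarrow> complex) set" where
  "Hn G Cl n = {f. (\<forall>g. g \<notin> tup G n \<longrightarrow> f g = 0) \<and>
      (\<forall>g\<in>tup G n. \<forall>h\<in>tup G n. (\<forall>j<n-1. \<exists>K\<in>Cl. g j \<in> K \<and> h j \<in> K) \<longrightarrow> f g = f h)}"

definition pos :: "nat set \<Rightarrow> nat \<Rightarrow> nat" where
  "pos S j = card {a\<in>S. a < j}"

text \<open>For A a subset of [n] = {1..n} with complement B, the element psi^A (x) psi^B,
  written as a function of (x,y) in G^(|A|-1) x G^(|B|-1); this is the linear extension
  of the formula in the paper.  Coordinate j in {1..n-1} of psi (stored at index j-1)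
  is copied when j and j+1 lie in the same part, and is contracted against alpha
  (if j in A) or beta (if j in B) otherwise; iota is inserted at the positions
  a_i (i < k) with a_(i+1) <> a_i + 1 (resp. for B).\<close>
definition Delta ::
  "('a, 'b) monoid_scheme \<Rightarrow> ('a \<Rightarrow> complex) \<Rightarrow> ('a \<Rightarrow> complex) \<Rightarrow> ('a \<Rightarrow> complex) \<Rightarrow>
   nat \<Rightarrow> nat set \<Rightarrow> ((nat \<Rightarrow> 'a) \<Rightarrow> complex) \<Rightarrow> (nat \<Rightarrow> 'a) \<Rightarrow> (nat \<Rightarrow> 'a) \<Rightarrow> complex" where
  "Delta G \<iota> \<alpha> \<beta> n A \<psi> x y =
    (let B = {1..n} - A;
         C = {j\<in>{1..n-1}. (j \<in> A) \<noteq> (Suc j \<in> A)}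
     in if x \<in> tup G (card A) \<and> y \<in> tup G (card B) then
        (\<Prod>a\<in>{a\<in>A. Suc a \<notin> A \<and> a < Max A}. \<iota> (x (pos A a))) *
        (\<Prod>b\<in>{b\<in>B. Suc b \<notin> B \<and> b < Max B}. \<iota> (y (pos B b))) *
        (\<Sum>g\<in>{g\<in>tup G n. \<forall>j\<in>{1..n-1}. (j \<in> A) = (Suc j \<in> A) \<longrightarrow>
                 g (j - 1) = (if j \<in> A then x (pos A j) else y (pos B j))}.
            \<psi> g * (\<Prod>j\<in>C. cnj ((if j \<in> A then \<alpha> else \<beta>) (g (j - 1)))))
        / of_nat (card (carrier G)) ^ card C
     else 0)"

text \<open>Graded linear functionals H -> C, represented degreewise; (zeta o xi) = m (zeta (x) xi) Delta.\<close>
definition conv ::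
  "('a, 'b) monoid_scheme \<Rightarrow> ('a \<Rightarrow> complex) \<Rightarrow> ('a \<Rightarrow> complex) \<Rightarrow> ('a \<Rightarrow> complex) \<Rightarrow>
   (nat \<Rightarrow> ((nat \<Rightarrow> 'a) \<Rightarrow> complex) \<Rightarrow> complex) \<Rightarrow> (nat \<Rightarrow> ((nat \<Rightarrow> 'a) \<Rightarrow> complex) \<Rightarrow> complex) \<Rightarrow>
   nat \<Rightarrow> ((nat \<Rightarrow> 'a) \<Rightarrow> complex) \<Rightarrow> complex" where
  "conv G \<iota> \<alpha> \<beta> \<zeta> \<xi> n \<psi> =
     (\<Sum>A\<in>Pow {1..n}. \<zeta> (card A) (\<lambda>x. \<xi> (n - card A) (\<lambda>y. Delta G \<iota> \<alpha> \<beta> n A \<psi> x y)))"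

definition counit :: "('a, 'b) monoid_scheme \<Rightarrow> nat \<Rightarrow> ((nat \<Rightarrow> 'a) \<Rightarrow> complex) \<Rightarrow> complex" where
  "counit G n \<psi> = (if n = 0 then \<psi> (\<lambda>_. \<one>\<^bsub>G\<^esub>) else 0)"

definition graded_functional ::
  "('a, 'b) monoid_scheme \<Rightarrow> 'a set set \<Rightarrow> (nat \<Rightarrow> ((nat \<Rightarrow> 'a) \<Rightarrow> complex) \<Rightarrow> complex) \<Rightarrow> bool" where
  "graded_functional G Cl \<xi> \<longleftrightarrow> (\<forall>n.
     (\<forall>f. f \<notin> Hn G Cl n \<longrightarrow> \<xi> n f = 0) \<and>
     (\<forall>f\<in>Hn G Cl n. \<forall>h\<in>Hn G Cl n. \<xi> n (\<lambda>t. f t + h t) = \<xi> n f + \<xi> n h) \<and>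
     (\<forall>c. \<forall>f\<in>Hn G Cl n. \<xi> n (\<lambda>t. c * f t) = c * \<xi> n f))"

definition conv_inv ::
  "('a, 'b) monoid_scheme \<Rightarrow> 'a set set \<Rightarrow> ('a \<Rightarrow> complex) \<Rightarrow> ('a \<Rightarrow> complex) \<Rightarrow> ('a \<Rightarrow> complex) \<Rightarrow>
   (nat \<Rightarrow> ((nat \<Rightarrow> 'a) \<Rightarrow> complex) \<Rightarrow> complex) \<Rightarrow> (nat \<Rightarrow> ((nat \<Rightarrow> 'a) \<Rightarrow> complex) \<Rightarrow> complex)" where
  "conv_inv G Cl \<iota> \<alpha> \<beta> \<zeta> = (THE \<xi>. graded_functional G Cl \<xi> \<and>
     (\<forall>n. \<forall>\<psi>\<in>Hn G Cl n. conv G \<iota> \<alpha> \<beta> \<zeta> \<xi> n \<psi> = counit G n \<psi> \<and>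
                         conv G \<iota> \<alpha> \<beta> \<xi> \<zeta> n \<psi> = counit G n \<psi>))"

text \<open>The linear character alpha_bullet>: gamma |-> <gamma, alpha^(x)(n-1) (x) chi^()>
  on degree n (inner product of G^(n-1)).\<close>
definition alpha_char ::
  "('a, 'b) monoid_scheme \<Rightarrow> 'a set set \<Rightarrow> ('a \<Rightarrow> complex) \<Rightarrow> nat \<Rightarrow> ((nat \<Rightarrow> 'a) \<Rightarrow> complex) \<Rightarrow> complex" where
  "alpha_char G Cl \<alpha> n \<gamma> = (if \<gamma> \<in> Hn G Cl n then
     (\<Sum>g\<in>tup G n. \<gamma> g * cnj (\<Prod>j<n-1. \<alpha> (g j))) / of_nat (card (carrier G)) ^ (n - 1)
   else 0)"

end

theory Submission
  imports Defs
begin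



definition XS :: "nat set \<Rightarrow> nat set" where "XS A = {a\<in>A. a < Max A}"

lemma pos_mono: "finite A \<Longrightarrow> a \<in> A \<Longrightarrow> b \<in> A \<Longrightarrow> a < b \<Longrightarrow> pos A a < pos A b"
  unfolding pos_def by (rule psubset_card_mono) auto

lemma pos_lt_card: "finite A \<Longrightarrow> a \<in> A \<Longrightarrow> pos A a < card A"
  unfolding pos_def by (rule psubset_card_mono) auto

lemma XS_eq: assumes "finite A" "A \<noteq> {}" shows "XS A = A - {Max A}"
proof
  show "XS A \<subseteq> A - {Max A}" unfolding XS_def by auto
  show "A - {Max A} \<subseteq> XS A"
  proof
    fix a assume a: "a \<in> A - {Max A}"
    then have "a \<le> Max A" using Max_ge[OF assms(1)] by blast
    then show "a \<in> XS A" using a by (auto simp: XS_def)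
  qed
qed

lemma XS_empty[simp]: "XS {} = {}" by (simp add: XS_def)

lemma pos_bij_A: assumes "finite A" shows "bij_betw (pos A) A {..<card A}"
proof -
  have inj: "inj_on (pos A) A"
  proof (rule inj_onI)
    fix a b assume ab: "a \<in> A" "b \<in> A" "pos A a = pos A b"
    show "a = b"
    proof (rule ccontr)
      assume "a \<noteq> b"
      then consider "a < b" | "b < a" by linarith
      then show False using pos_mono[OF assms] ab by cases force+
    qed
  qed
  have sub: "pos A ` A \<subseteq> {..<card A}" using pos_lt_card assms by auto
  have "card (pos A ` A) = card {..<card A}" using card_image[OF inj] by simp
  then have "pos A ` A = {..<card A}" using sub by (simp add: card_subset_eq)
  then show ?thesis using inj by (simp add: bij_betw_def)
qed

lemma pos_Max: assumes "finite A" "A \<noteq> {}" shows "pos A (Max A) = card A - 1"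
proof -
  have "{a\<in>A. a < Max A} = A - {Max A}" using XS_eq[OF assms] by (simp add: XS_def)
  then show ?thesis unfolding pos_def using assms by simp
qed

lemma pos_bij: assumes "finite A" shows "bij_betw (pos A) (XS A) {..<card A - 1}"
proof (cases "A = {}")
  case True then show ?thesis by (simp add: bij_betw_def)
next
  case False
  have b: "bij_betw (pos A) A {..<card A}" by (rule pos_bij_A[OF assms])
  have "bij_betw (pos A) (A - {Max A}) ({..<card A} - {pos A (Max A)})"
    by (rule bij_betw_DiffI[OF b]) (auto simp: False assms pos_lt_card)
  moreover have "{..<card A} - {pos A (Max A)} = {..<card A - 1}"
    using pos_Max[OF assms False] False assms by (auto simp: card_gt_0_iff)
  ultimately show ?thesis using XS_eq[OF assms False] by simp
qed

lemma card_XS: "finite A \<Longrightarrow> card (XS A) = card A - 1"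
  using bij_betw_same_card[OF pos_bij] by simp

lemma alt_sum_Pow: "finite S \<Longrightarrow> (\<Sum>A\<in>Pow S. (-1::complex) ^ card A) = (if S = {} then 1 else 0)"
proof (induction S rule: finite_induct)
  case empty then show ?case by simp
next
  case (insert x S)
  have d: "Pow (insert x S) = Pow S \<union> insert x ` Pow S" by (rule Pow_insert)
  have disj: "Pow S \<inter> insert x ` Pow S = {}" using insert by auto
  have inj: "inj_on (insert x) (Pow S)"
  proof (rule inj_onI)
    fix a b assume "a \<in> Pow S" "b \<in> Pow S" "insert x a = insert x b"
    then show "a = b" using insert(2) by (metis Diff_insert_absorb PowD subsetD)
  qed
  have "(\<Sum>A\<in>insert x ` Pow S. (-1::complex) ^ card A) = (\<Sum>A\<in>Pow S. (-1) ^ card (insert x A))"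
    by (rule sum.reindex[OF inj, unfolded comp_def])
  also have "\<dots> = (\<Sum>A\<in>Pow S. - ((-1) ^ card A))"
    apply (rule sum.cong, simp)
    using insert by (subst card_insert_disjoint) (auto intro: finite_subset)
  finally have "(\<Sum>A\<in>insert x ` Pow S. (-1::complex) ^ card A) = - (\<Sum>A\<in>Pow S. (-1) ^ card A)"
    by (simp add: sum_negf)
  then show ?case unfolding d using insert disj
    by (subst sum.union_disjoint) auto
qed



lemma sum_tup:
  assumes bij: "bij_betw p X {..<m - 1}"
  shows "(\<Sum>x\<in>tup G m. F (restrict (\<lambda>a. x (p a)) X)) = (\<Sum>u\<in>PiE X (\<lambda>_. carrier G). F u)"
proof -
  let ?h = "\<lambda>x. restrict (\<lambda>a. x (p a)) X"
  let ?q = "the_inv_into X p"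
  have inj: "inj_on ?h (tup G m)"
  proof (rule inj_onI)
    fix x y assume x: "x \<in> tup G m" and y: "y \<in> tup G m" and e: "?h x = ?h y"
    show "x = y"
    proof
      fix i show "x i = y i"
      proof (cases "i < m - 1")
        case True
        then obtain a where a: "a \<in> X" "p a = i" using bij by (metis bij_betw_iff_bijections lessThan_iff)
        have "?h x a = ?h y a" using e by simp
        then show ?thesis using a by simp
      next
        case False then show ?thesis using x y by (simp add: tup_def)
      qed
    qed
  qed
  have img: "?h ` tup G m = PiE X (\<lambda>_. carrier G)"
  proof
    have pl: "\<And>a. a \<in> X \<Longrightarrow> p a < m - 1" using bij by (auto simp: bij_betw_def)
    show "?h ` tup G m \<subseteq> PiE X (\<lambda>_. carrier G)"
      using pl by (auto simp: tup_def)
    show "PiE X (\<lambda>_. carrier G) \<subseteq> ?h ` tup G m"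
    proof
      fix u assume u: "u \<in> PiE X (\<lambda>_. carrier G)"
      define x where "x = (\<lambda>i. if i < m - 1 then u (?q i) else \<one>\<^bsub>G\<^esub>)"
      have qX: "?q i \<in> X" if "i < m - 1" for i
        using bij that by (metis bij_betw_def lessThan_iff the_inv_into_into subset_refl)
      have "x \<in> tup G m" using u qX unfolding x_def tup_def by auto
      moreover have "?h x = u"
      proof
        fix a show "?h x a = u a"
        proof (cases "a \<in> X")
          case True
          then have "p a < m - 1" using bij by (auto simp: bij_betw_def)
          moreover have "?q (p a) = a" using bij True by (simp add: bij_betw_def the_inv_into_f_f)
          ultimately show ?thesis using True by (simp add: x_def)
        next
          case False then show ?thesis using u by (simp add: PiE_def extensional_def)
        qed
      qed
      ultimately show "u \<in> ?h ` tup G m" by blast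
    qed
  qed
  have "bij_betw ?h (tup G m) (PiE X (\<lambda>_. carrier G))" using inj img by (simp add: bij_betw_def)
  then show ?thesis by (rule sum.reindex_bij_betw)
qed

lemma sum_PiE_fix:
  fixes f h :: "'i \<Rightarrow> 'a \<Rightarrow> complex"
  assumes fT: "finite T" and fF: "finite F" and fS: "finite S" and disj: "T \<inter> F = {}"
    and w: "\<And>a. a \<in> T \<Longrightarrow> w a \<in> S"
  shows "(\<Sum>u\<in>PiE (T \<union> F) (\<lambda>_. S). if (\<forall>a\<in>T. u a = w a) then (\<Prod>a\<in>T. f a (u a)) * (\<Prod>a\<in>F. h a (u a)) else 0)
     = (\<Prod>a\<in>T. f a (w a)) * (\<Prod>a\<in>F. \<Sum>t\<in>S. h a t)"
proof -
  have fin: "finite (PiE (T \<union> F) (\<lambda>_. S))" using fT fF fS by (simp add: finite_PiE)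
  let ?S = "{u\<in>PiE (T \<union> F) (\<lambda>_. S). \<forall>a\<in>T. u a = w a}"
  have "(\<Sum>u\<in>PiE (T \<union> F) (\<lambda>_. S). if (\<forall>a\<in>T. u a = w a) then (\<Prod>a\<in>T. f a (u a)) * (\<Prod>a\<in>F. h a (u a)) else 0)
      = (\<Sum>u\<in>PiE (T \<union> F) (\<lambda>_. S). if (\<forall>a\<in>T. u a = w a) then (\<Prod>a\<in>T. f a (w a)) * (\<Prod>a\<in>F. h a (u a)) else 0)"
  proof (rule sum.cong[OF refl])
    fix u
    have "(\<forall>a\<in>T. u a = w a) \<Longrightarrow> (\<Prod>a\<in>T. f a (u a)) = (\<Prod>a\<in>T. f a (w a))"
      by (rule prod.cong) auto
    then show "(if (\<forall>a\<in>T. u a = w a) then (\<Prod>a\<in>T. f a (u a)) * (\<Prod>a\<in>F. h a (u a)) else 0) =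
      (if (\<forall>a\<in>T. u a = w a) then (\<Prod>a\<in>T. f a (w a)) * (\<Prod>a\<in>F. h a (u a)) else 0)" by simp
  qed
  also have "\<dots> = (\<Sum>u\<in>?S. (\<Prod>a\<in>T. f a (w a)) * (\<Prod>a\<in>F. h a (u a)))"
    by (rule sum.inter_filter[OF fin, symmetric])
  also have "\<dots> = (\<Sum>v\<in>PiE F (\<lambda>_. S). (\<Prod>a\<in>T. f a (w a)) * (\<Prod>a\<in>F. h a (v a)))"
  proof (rule sum.reindex_bij_witness[where i = "\<lambda>v a. if a \<in> T then w a else v a" and j = "\<lambda>u. restrict u F"])
    fix u assume u: "u \<in> ?S"
    show "(\<lambda>a. if a \<in> T then w a else restrict u F a) = u"
    proof
      fix a show "(if a \<in> T then w a else restrict u F a) = u a"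
        using u by (auto simp: PiE_def extensional_def)
    qed
    show "restrict u F \<in> PiE F (\<lambda>_. S)" using u by auto
    show "(\<Prod>a\<in>T. f a (w a)) * (\<Prod>a\<in>F. h a (restrict u F a)) = (\<Prod>a\<in>T. f a (w a)) * (\<Prod>a\<in>F. h a (u a))"
      by simp
  next
    fix v assume v: "v \<in> PiE F (\<lambda>_. S)"
    show "restrict (\<lambda>a. if a \<in> T then w a else v a) F = v"
    proof
      fix a show "restrict (\<lambda>a. if a \<in> T then w a else v a) F a = v a"
        using v disj by (auto simp: PiE_def extensional_def)
    qed
    show "(\<lambda>a. if a \<in> T then w a else v a) \<in> ?S"
      using v w by (auto simp: PiE_def extensional_def)
  qed
  also have "\<dots> = (\<Prod>a\<in>T. f a (w a)) * (\<Sum>v\<in>PiE F (\<lambda>_. S). (\<Prod>a\<in>F. h a (v a)))"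
    by (simp add: sum_distrib_left)
  also have "(\<Sum>v\<in>PiE F (\<lambda>_. S). (\<Prod>a\<in>F. h a (v a))) = (\<Prod>a\<in>F. \<Sum>t\<in>S. h a t)"
    using prod_sum_PiE[OF fF, of "\<lambda>_. S" h] fS by simp
  finally show ?thesis .
qed


lemma bij_minus1: "bij_betw (\<lambda>j. j - 1) {1..(n::nat) - 1} {..<n - 1}"
proof -
  have "bij_betw (\<lambda>j. j - 1) {1..n - 1} {0..<n - 1}"
    by (rule bij_betw_byWitness[where f' = Suc]) auto
  then show ?thesis by (simp add: atLeast0LessThan)
qed

lemma finite_tup: assumes "finite (carrier G)" shows "finite (tup G m)"
proof -
  have f: "finite (PiE {..<m - 1} (\<lambda>_. carrier G))" using assms by (simp add: finite_PiE)
  have "tup G m \<subseteq> (\<lambda>u i. if i < m - 1 then u i else \<one>\<^bsub>G\<^esub>) ` PiE {..<m - 1} (\<lambda>_. carrier G)"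
  proof
    fix x assume x: "x \<in> tup G m"
    have "x = (\<lambda>i. if i < m - 1 then restrict x {..<m - 1} i else \<one>\<^bsub>G\<^esub>)"
      using x by (auto simp: tup_def)
    moreover have "restrict x {..<m - 1} \<in> PiE {..<m - 1} (\<lambda>_. carrier G)" using x by (auto simp: tup_def)
    ultimately show "x \<in> (\<lambda>u i. if i < m - 1 then u i else \<one>\<^bsub>G\<^esub>) ` PiE {..<m - 1} (\<lambda>_. carrier G)" by blast
  qed
  then show ?thesis using finite_imageI[OF f] by (rule finite_subset)
qed

definition TS :: "nat set \<Rightarrow> nat set" where "TS A = {a\<in>A. Suc a \<in> A}"
definition FS :: "nat set \<Rightarrow> nat set" where "FS A = {a\<in>A. Suc a \<notin> A \<and> a < Max A}"
definition CS :: "nat \<Rightarrow> nat set \<Rightarrow> nat set" where "CS n A = {j\<in>{1..n-1}. (j \<in> A) \<noteq> (Suc j \<in> A)}"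
definition rho :: "nat set \<Rightarrow> (nat \<Rightarrow> 'a) \<Rightarrow> nat \<Rightarrow> 'a" where "rho A x = restrict (\<lambda>a. x (pos A a)) (XS A)"
definition ex :: "('a, 'b) monoid_scheme \<Rightarrow> nat \<Rightarrow> (nat \<Rightarrow> 'a) \<Rightarrow> nat \<Rightarrow> 'a" where
  "ex G n w = (\<lambda>i. if i < n - 1 then w (Suc i) else \<one>\<^bsub>G\<^esub>)"

definition Wsum where
  "Wsum G \<psi> \<alpha> n A u v = (\<Sum>w\<in>PiE {1..n-1} (\<lambda>_. carrier G).
     if (\<forall>j\<in>TS A. w j = u j) \<and> (\<forall>j\<in>TS ({1..n} - A). w j = v j)
     then \<psi> (ex G n w) * (\<Prod>j\<in>CS n A. cnj (\<alpha> (w j))) else 0)"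

definition Phi where
  "Phi G \<iota> \<alpha> \<psi> n A u v = (\<Prod>a\<in>FS A. \<iota> (u a)) * (\<Prod>b\<in>FS ({1..n} - A). \<iota> (v b)) *
     Wsum G \<psi> \<alpha> n A u v / of_nat (card (carrier G)) ^ card (CS n A)"

lemma TS_sub: assumes "A \<subseteq> {1..n}" shows "TS A \<subseteq> {1..n-1}"
proof
  fix x assume "x \<in> TS A"
  then have "x \<in> {1..n}" "Suc x \<in> {1..n}" using assms by (auto simp: TS_def)
  then show "x \<in> {1..n-1}" by auto
qed

lemma TS_XS: assumes "finite A" shows "TS A \<subseteq> XS A"
proof
  fix a assume "a \<in> TS A"
  then have a: "a \<in> A" "Suc a \<in> A" by (auto simp: TS_def)
  then have "Suc a \<le> Max A" using Max_ge[OF assms] by blast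
  then show "a \<in> XS A" using a by (simp add: XS_def)
qed

lemma FS_XS: "FS A \<subseteq> XS A"
  unfolding FS_def XS_def by auto

lemma XS_split: assumes "finite A" shows "XS A = TS A \<union> FS A"
proof
  show "XS A \<subseteq> TS A \<union> FS A" unfolding XS_def TS_def FS_def by auto
  show "TS A \<union> FS A \<subseteq> XS A" using TS_XS[OF assms] FS_XS by blast
qed

lemma TS_FS_disj: "TS A \<inter> FS A = {}"
  unfolding TS_def FS_def by auto

lemma J_split: assumes "A \<subseteq> {1..n}"
  shows "{1..n-1} = TS A \<union> TS ({1..n} - A) \<union> CS n A"
proof
  have "{1..n} - A \<subseteq> {1..n}" by blast
  then show "TS A \<union> TS ({1..n} - A) \<union> CS n A \<subseteq> {1..n-1}"
    using TS_sub[OF assms] TS_sub[of "{1..n} - A" n] by (auto simp: CS_def)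
  show "{1..n-1} \<subseteq> TS A \<union> TS ({1..n} - A) \<union> CS n A"
  proof
    fix j assume j: "j \<in> {1..n-1}"
    then have "j \<in> {1..n}" "Suc j \<in> {1..n}" by auto
    then show "j \<in> TS A \<union> TS ({1..n} - A) \<union> CS n A"
      using j unfolding TS_def CS_def by auto
  qed
qed



lemma Delta_Phi:
  assumes fin: "finite (carrier G)" and A: "A \<subseteq> {1..n}"
    and x: "x \<in> tup G (card A)" and y: "y \<in> tup G (card ({1..n} - A))"
  shows "Delta G \<iota> \<alpha> \<alpha> n A \<psi> x y =
    Phi G \<iota> \<alpha> \<psi> n A (rho A x) (rho ({1..n} - A) y)"
proof -
  define B where "B = {1..n} - A"
  have fA: "finite A" using finite_subset[OF A] by simp
  have fB: "finite B" by (simp add: B_def)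
  let ?C = "{j\<in>{1..n-1}. (j \<in> A) \<noteq> (Suc j \<in> A)}"
  let ?cond = "\<lambda>g. \<forall>j\<in>{1..n-1}. (j \<in> A) = (Suc j \<in> A) \<longrightarrow>
                 g (j - 1) = (if j \<in> A then x (pos A j) else y (pos B j))"
  have p1: "(\<Prod>a\<in>{a\<in>A. Suc a \<notin> A \<and> a < Max A}. \<iota> (x (pos A a))) = (\<Prod>a\<in>FS A. \<iota> (rho A x a))"
    by (rule prod.cong) (auto simp: FS_def rho_def XS_def)
  have p2: "(\<Prod>b\<in>{b\<in>B. Suc b \<notin> B \<and> b < Max B}. \<iota> (y (pos B b))) = (\<Prod>b\<in>FS B. \<iota> (rho B y b))"
    by (rule prod.cong) (auto simp: FS_def rho_def XS_def)
  let ?F = "\<lambda>w. if (\<forall>j\<in>TS A. w j = rho A x j) \<and> (\<forall>j\<in>TS B. w j = rho B y j)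
     then \<psi> (ex G n w) * (\<Prod>j\<in>CS n A. cnj (\<alpha> (w j))) else 0"
  have s: "(\<Sum>g\<in>{g\<in>tup G n. ?cond g}. \<psi> g * (\<Prod>j\<in>?C. cnj ((if j \<in> A then \<alpha> else \<alpha>) (g (j - 1)))))
      = Wsum G \<psi> \<alpha> n A (rho A x) (rho B y)"
  proof -
    have "(\<Sum>g\<in>{g\<in>tup G n. ?cond g}. \<psi> g * (\<Prod>j\<in>?C. cnj ((if j \<in> A then \<alpha> else \<alpha>) (g (j - 1)))))
        = (\<Sum>g\<in>tup G n. if ?cond g then \<psi> g * (\<Prod>j\<in>?C. cnj ((if j \<in> A then \<alpha> else \<alpha>) (g (j - 1)))) else 0)"
      by (rule sum.inter_filter[OF finite_tup[OF fin]])
    also have "\<dots> = (\<Sum>g\<in>tup G n. ?F (restrict (\<lambda>j. g (j - 1)) {1..n-1}))"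
    proof (rule sum.cong[OF refl])
      fix g assume g: "g \<in> tup G n"
      let ?w = "restrict (\<lambda>j. g (j - 1)) {1..n-1}"
      have e: "ex G n ?w = g"
      proof
        fix i show "ex G n ?w i = g i" using g by (auto simp: ex_def tup_def)
      qed
      have c: "(\<Prod>j\<in>?C. cnj ((if j \<in> A then \<alpha> else \<alpha>) (g (j - 1)))) = (\<Prod>j\<in>CS n A. cnj (\<alpha> (?w j)))"
        by (rule prod.cong) (auto simp: CS_def)
      have TAX: "TS A \<subseteq> XS A" using TS_XS[OF fA] .
      have TBX: "TS B \<subseteq> XS B" using TS_XS[OF fB] .
      have cc: "?cond g \<longleftrightarrow> (\<forall>j\<in>TS A. ?w j = rho A x j) \<and> (\<forall>j\<in>TS B. ?w j = rho B y j)"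
      proof
        assume h: "?cond g"
        show "(\<forall>j\<in>TS A. ?w j = rho A x j) \<and> (\<forall>j\<in>TS B. ?w j = rho B y j)"
        proof (intro conjI ballI)
          fix j assume j: "j \<in> TS A"
          then have "j \<in> {1..n-1}" "j \<in> A" "Suc j \<in> A" "j \<in> XS A" using TS_sub[OF A] TAX by (auto simp: TS_def)
          then show "?w j = rho A x j" using h by (auto simp: rho_def)
        next
          fix j assume j: "j \<in> TS B"
          have "B \<subseteq> {1..n}" by (auto simp: B_def)
          then have "j \<in> {1..n-1}" "j \<notin> A" "Suc j \<notin> A" "j \<in> XS B" using j TS_sub TBX by (auto simp: TS_def B_def)
          then show "?w j = rho B y j" using h by (auto simp: rho_def)
        qed
      next
        assume h: "(\<forall>j\<in>TS A. ?w j = rho A x j) \<and> (\<forall>j\<in>TS B. ?w j = rho B y j)"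
        show "?cond g"
        proof (intro ballI impI)
          fix j assume j: "j \<in> {1..n-1}" and e: "(j \<in> A) = (Suc j \<in> A)"
          show "g (j - 1) = (if j \<in> A then x (pos A j) else y (pos B j))"
          proof (cases "j \<in> A")
            case True
            then have jT: "j \<in> TS A" using e by (simp add: TS_def)
            then have "?w j = rho A x j" using h by blast
            moreover have "j \<in> XS A" using TAX jT by blast
            ultimately show ?thesis using True j by (simp add: rho_def)
          next
            case False
            then have jT: "j \<in> TS B" using e j by (auto simp: TS_def B_def)
            then have "?w j = rho B y j" using h by blast
            moreover have "j \<in> XS B" using TBX jT by blast
            ultimately show ?thesis using False j by (simp add: rho_def)
          qed
        qed
      qed
      show "(if ?cond g then \<psi> g * (\<Prod>j\<in>?C. cnj ((if j \<in> A then \<alpha> else \<alpha>) (g (j - 1)))) else 0) = ?F ?w"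
        using cc c e by simp
    qed
    also have "\<dots> = Wsum G \<psi> \<alpha> n A (rho A x) (rho B y)"
      unfolding Wsum_def B_def by (rule sum_tup[OF bij_minus1])
    finally show ?thesis .
  qed
  have yB: "y \<in> tup G (card B)" using y by (simp add: B_def)
  have D: "Delta G \<iota> \<alpha> \<alpha> n A \<psi> x y =
    (\<Prod>a\<in>{a\<in>A. Suc a \<notin> A \<and> a < Max A}. \<iota> (x (pos A a))) *
    (\<Prod>b\<in>{b\<in>B. Suc b \<notin> B \<and> b < Max B}. \<iota> (y (pos B b))) *
    (\<Sum>g\<in>{g\<in>tup G n. ?cond g}. \<psi> g * (\<Prod>j\<in>?C. cnj ((if j \<in> A then \<alpha> else \<alpha>) (g (j - 1)))))
    / of_nat (card (carrier G)) ^ card ?C"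
    unfolding Delta_def Let_def B_def[symmetric] by (simp only: x yB simp_thms if_True)
  show ?thesis
    unfolding D p1 p2 s Phi_def B_def[symmetric] CS_def ..
qed

lemma sum_PiE_fix_gen:
  fixes H :: "('i \<Rightarrow> 'a) \<Rightarrow> complex"
  assumes fT: "finite T" and fF: "finite F" and fS: "finite S" and disj: "T \<inter> F = {}"
    and w: "\<And>a. a \<in> T \<Longrightarrow> w a \<in> S"
  shows "(\<Sum>u\<in>PiE (T \<union> F) (\<lambda>_. S). if (\<forall>a\<in>T. u a = w a) then H u else 0)
     = (\<Sum>v\<in>PiE F (\<lambda>_. S). H (\<lambda>a. if a \<in> T then w a else v a))"
proof -
  have fin: "finite (PiE (T \<union> F) (\<lambda>_. S))" using fT fF fS by (simp add: finite_PiE)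
  let ?S = "{u\<in>PiE (T \<union> F) (\<lambda>_. S). \<forall>a\<in>T. u a = w a}"
  have "(\<Sum>u\<in>PiE (T \<union> F) (\<lambda>_. S). if (\<forall>a\<in>T. u a = w a) then H u else 0) = (\<Sum>u\<in>?S. H u)"
    by (rule sum.inter_filter[OF fin, symmetric])
  also have "\<dots> = (\<Sum>v\<in>PiE F (\<lambda>_. S). H (\<lambda>a. if a \<in> T then w a else v a))"
  proof (rule sum.reindex_bij_witness[where i = "\<lambda>v a. if a \<in> T then w a else v a" and j = "\<lambda>u. restrict u F"])
    fix u assume u: "u \<in> ?S"
    show "(\<lambda>a. if a \<in> T then w a else restrict u F a) = u"
    proof
      fix a show "(if a \<in> T then w a else restrict u F a) = u a"
        using u by (auto simp: PiE_def extensional_def)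
    qed
    then show "H (\<lambda>a. if a \<in> T then w a else restrict u F a) = H u" by simp
    show "restrict u F \<in> PiE F (\<lambda>_. S)" using u by auto
  next
    fix v assume v: "v \<in> PiE F (\<lambda>_. S)"
    show "restrict (\<lambda>a. if a \<in> T then w a else v a) F = v"
    proof
      fix a show "restrict (\<lambda>a. if a \<in> T then w a else v a) F a = v a"
        using v disj by (auto simp: PiE_def extensional_def)
    qed
    show "(\<lambda>a. if a \<in> T then w a else v a) \<in> ?S"
      using v w by (auto simp: PiE_def extensional_def)
  qed
  finally show ?thesis .
qed

definition blk :: "'a set set \<Rightarrow> 'i set \<Rightarrow> ('i \<Rightarrow> 'a) \<Rightarrow> ('i \<Rightarrow> 'a) \<Rightarrow> bool" where
  "blk Cl X u u' \<longleftrightarrow> (\<forall>a\<in>X. \<exists>K\<in>Cl. u a \<in> K \<and> u' a \<in> K)"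

lemma TS_disj: "TS A \<inter> TS ({1..n} - A) = {}" by (auto simp: TS_def)

lemma CS_disj: "(TS A \<union> TS ({1..n} - A)) \<inter> CS n A = {}" by (auto simp: TS_def CS_def)

context
  fixes G :: "('a, 'b) monoid_scheme" and Cl :: "'a set set" and \<iota> \<alpha> :: "'a \<Rightarrow> complex"
  assumes fin: "finite (carrier G)" and part: "partition_on (carrier G) Cl"
    and iota: "\<iota> \<in> scf G Cl" and alpha: "\<alpha> \<in> scf G Cl"
begin

lemma blockD: "K \<in> Cl \<Longrightarrow> t \<in> K \<Longrightarrow> t \<in> carrier G"
  using part unfolding partition_on_def by blast

lemma blockI: "t \<in> carrier G \<Longrightarrow> \<exists>K\<in>Cl. t \<in> K"
  using part unfolding partition_on_def by blast

lemma iota_const: "K \<in> Cl \<Longrightarrow> s \<in> K \<Longrightarrow> t \<in> K \<Longrightarrow> \<iota> s = \<iota> t"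
  using iota unfolding scf_def by blast

lemma Wsum_split:
  assumes A: "A \<subseteq> {1..n}"
    and u: "\<And>a. a \<in> TS A \<Longrightarrow> u a \<in> carrier G" and v: "\<And>a. a \<in> TS ({1..n} - A) \<Longrightarrow> v a \<in> carrier G"
  shows "Wsum G \<psi> \<alpha> n A u v = (\<Sum>z\<in>PiE (CS n A) (\<lambda>_. carrier G).
     (\<lambda>w. \<psi> (ex G n w) * (\<Prod>j\<in>CS n A. cnj (\<alpha> (w j))))
       (\<lambda>j. if j \<in> TS A \<union> TS ({1..n} - A) then (if j \<in> TS A then u j else v j) else z j))"
proof -
  let ?T = "TS A \<union> TS ({1..n} - A)"
  let ?uv = "\<lambda>j. if j \<in> TS A then u j else v j"
  have J: "{1..n-1} = ?T \<union> CS n A" using J_split[OF A] by blast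
  have c: "\<And>w. ((\<forall>j\<in>TS A. w j = u j) \<and> (\<forall>j\<in>TS ({1..n} - A). w j = v j)) = (\<forall>j\<in>?T. w j = ?uv j)"
    using TS_disj[of A n] by auto
  have fT: "finite ?T" using J by (metis finite_Un finite_atLeastAtMost)
  have fC: "finite (CS n A)" by (simp add: CS_def)
  show ?thesis
    unfolding Wsum_def J c
    by (rule sum_PiE_fix_gen[OF fT fC fin CS_disj]) (use u v in auto)
qed

lemma Phi_inv:
  assumes A: "A \<subseteq> {1..n}" and psi: "\<psi> \<in> Hn G Cl n"
    and uu: "blk Cl (XS A) u u'" and vv: "blk Cl (XS ({1..n} - A)) v v'"
  shows "Phi G \<iota> \<alpha> \<psi> n A u v = Phi G \<iota> \<alpha> \<psi> n A u' v'"
proof -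
  define B where "B = {1..n} - A"
  have fA: "finite A" using finite_subset[OF A] by simp
  have fB: "finite B" by (simp add: B_def)
  have uu': "blk Cl (XS A) u' u" using uu by (auto simp: blk_def)
  have vv': "blk Cl (XS B) v' v" using vv by (auto simp: blk_def B_def)
  have uC: "\<And>a. a \<in> XS A \<Longrightarrow> u a \<in> carrier G" "\<And>a. a \<in> XS A \<Longrightarrow> u' a \<in> carrier G"
    using uu blockD unfolding blk_def by blast+
  have vC: "\<And>a. a \<in> XS B \<Longrightarrow> v a \<in> carrier G" "\<And>a. a \<in> XS B \<Longrightarrow> v' a \<in> carrier G"
    using vv blockD unfolding blk_def B_def by blast+
  have TA: "TS A \<subseteq> XS A" using TS_XS[OF fA] .
  have TB: "TS B \<subseteq> XS B" using TS_XS[OF fB] .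
  have p1: "(\<Prod>a\<in>FS A. \<iota> (u a)) = (\<Prod>a\<in>FS A. \<iota> (u' a))"
  proof (rule prod.cong[OF refl])
    fix a assume "a \<in> FS A"
    then have "a \<in> XS A" using FS_XS by blast
    then obtain K where "K \<in> Cl" "u a \<in> K" "u' a \<in> K" using uu unfolding blk_def by blast
    then show "\<iota> (u a) = \<iota> (u' a)" by (rule iota_const)
  qed
  have p2: "(\<Prod>a\<in>FS B. \<iota> (v a)) = (\<Prod>a\<in>FS B. \<iota> (v' a))"
  proof (rule prod.cong[OF refl])
    fix a assume "a \<in> FS B"
    then have "a \<in> XS B" using FS_XS by blast
    then obtain K where "K \<in> Cl" "v a \<in> K" "v' a \<in> K" using vv unfolding blk_def B_def by blast
    then show "\<iota> (v a) = \<iota> (v' a)" by (rule iota_const)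
  qed
  have w: "Wsum G \<psi> \<alpha> n A u v = Wsum G \<psi> \<alpha> n A u' v'"
  proof -
    let ?T = "TS A \<union> TS B"
    have uT: "\<And>a. a \<in> TS A \<Longrightarrow> u a \<in> carrier G" "\<And>a. a \<in> TS A \<Longrightarrow> u' a \<in> carrier G"
      using uC TA by blast+
    have vT: "\<And>a. a \<in> TS ({1..n} - A) \<Longrightarrow> v a \<in> carrier G" "\<And>a. a \<in> TS ({1..n} - A) \<Longrightarrow> v' a \<in> carrier G"
      using vC TB unfolding B_def by blast+
    have s1: "Wsum G \<psi> \<alpha> n A u v = (\<Sum>z\<in>PiE (CS n A) (\<lambda>_. carrier G).
     (\<lambda>w. \<psi> (ex G n w) * (\<Prod>j\<in>CS n A. cnj (\<alpha> (w j))))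
       (\<lambda>j. if j \<in> ?T then (if j \<in> TS A then u j else v j) else z j))"
      unfolding B_def by (rule Wsum_split[OF A uT(1) vT(1)])
    have s2: "Wsum G \<psi> \<alpha> n A u' v' = (\<Sum>z\<in>PiE (CS n A) (\<lambda>_. carrier G).
     (\<lambda>w. \<psi> (ex G n w) * (\<Prod>j\<in>CS n A. cnj (\<alpha> (w j))))
       (\<lambda>j. if j \<in> ?T then (if j \<in> TS A then u' j else v' j) else z j))"
      unfolding B_def by (rule Wsum_split[OF A uT(2) vT(2)])
    show ?thesis unfolding s1 s2
    proof (rule sum.cong[OF refl])
      fix z assume z: "z \<in> PiE (CS n A) (\<lambda>_. carrier G)"
      define m where "m = (\<lambda>j. if j \<in> ?T then (if j \<in> TS A then u j else v j) else z j)"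
      define m' where "m' = (\<lambda>j. if j \<in> ?T then (if j \<in> TS A then u' j else v' j) else z j)"
      have CT: "CS n A \<inter> ?T = {}" using CS_disj[of A n] unfolding B_def by blast
      have pc: "(\<Prod>j\<in>CS n A. cnj (\<alpha> (m j))) = (\<Prod>j\<in>CS n A. cnj (\<alpha> (m' j)))"
        by (rule prod.cong[OF refl]) (use CT in \<open>auto simp: m_def m'_def\<close>)
      have J: "{1..n-1} = ?T \<union> CS n A" using J_split[OF A] unfolding B_def by blast
      have inJ: "Suc i \<in> ?T \<union> CS n A" if "i < n - 1" for i using that J by auto
      have mem: "\<exists>K\<in>Cl. m (Suc i) \<in> K \<and> m' (Suc i) \<in> K" if i: "i < n - 1" for i
      proof (cases "Suc i \<in> TS A")
        case True
        then have "Suc i \<in> XS A" using TA by blast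
        then obtain K where "K \<in> Cl" "u (Suc i) \<in> K" "u' (Suc i) \<in> K" using uu unfolding blk_def by blast
        then show ?thesis using True unfolding m_def m'_def by auto
      next
        case F1: False
        show ?thesis
        proof (cases "Suc i \<in> TS B")
          case True
          then have "Suc i \<in> XS B" using TB by blast
          then obtain K where "K \<in> Cl" "v (Suc i) \<in> K" "v' (Suc i) \<in> K" using vv unfolding blk_def B_def by blast
          then show ?thesis using True F1 unfolding m_def m'_def by auto
        next
          case False
          then have "Suc i \<in> CS n A" using inJ[OF i] F1 by blast
          then have "z (Suc i) \<in> carrier G" using z by auto
          then obtain K where "K \<in> Cl" "z (Suc i) \<in> K" using blockI by blast
          then show ?thesis using F1 False unfolding m_def m'_def by auto
        qed
      qed
      have cm: "m (Suc i) \<in> carrier G \<and> m' (Suc i) \<in> carrier G" if "i < n - 1" for i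
        using mem[OF that] blockD by blast
      have tm: "ex G n m \<in> tup G n" "ex G n m' \<in> tup G n"
        using cm unfolding tup_def ex_def by auto
      have "\<forall>j<n-1. \<exists>K\<in>Cl. ex G n m j \<in> K \<and> ex G n m' j \<in> K"
        using mem by (simp add: ex_def)
      then have "\<psi> (ex G n m) = \<psi> (ex G n m')"
        using psi tm unfolding Hn_def by blast
      show "(\<lambda>w. \<psi> (ex G n w) * (\<Prod>j\<in>CS n A. cnj (\<alpha> (w j))))
          (\<lambda>j. if j \<in> ?T then (if j \<in> TS A then u j else v j) else z j) =
        (\<lambda>w. \<psi> (ex G n w) * (\<Prod>j\<in>CS n A. cnj (\<alpha> (w j))))
          (\<lambda>j. if j \<in> ?T then (if j \<in> TS A then u' j else v' j) else z j)"
      proof -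
        have "\<psi> (ex G n m) * (\<Prod>j\<in>CS n A. cnj (\<alpha> (m j))) = \<psi> (ex G n m') * (\<Prod>j\<in>CS n A. cnj (\<alpha> (m' j)))"
          using pc \<open>\<psi> (ex G n m) = \<psi> (ex G n m')\<close> by simp
        then show ?thesis unfolding m_def m'_def by simp
      qed
    qed
  qed
  show ?thesis unfolding Phi_def B_def[symmetric] p1 p2 w ..
qed

lemma card_B: "A \<subseteq> {1..n} \<Longrightarrow> card ({1..n} - A) = n - card A"
  using finite_subset[of A "{1..n}"] by (simp add: card_Diff_subset)

lemma zero_Hn: "(\<lambda>_. 0) \<in> Hn G Cl m" by (simp add: Hn_def)

lemma alpha_char_zero: "alpha_char G Cl \<alpha> m (\<lambda>_. 0) = 0"
  by (simp add: alpha_char_def)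

lemma rho_blk:
  assumes fA: "finite A" and x: "x \<in> tup G (card A)" and x': "x' \<in> tup G (card A)"
    and e: "\<forall>j<card A - 1. \<exists>K\<in>Cl. x j \<in> K \<and> x' j \<in> K"
  shows "blk Cl (XS A) (rho A x) (rho A x')"
  unfolding blk_def
proof
  fix a assume a: "a \<in> XS A"
  then have "pos A a < card A - 1" using pos_bij[OF fA] by (auto simp: bij_betw_def)
  then show "\<exists>K\<in>Cl. rho A x a \<in> K \<and> rho A x' a \<in> K" using e a by (simp add: rho_def)
qed

lemma rho_blk_refl:
  assumes fA: "finite A" and x: "x \<in> tup G (card A)"
  shows "blk Cl (XS A) (rho A x) (rho A x)"
proof (rule rho_blk[OF fA x x])
  show "\<forall>j<card A - 1. \<exists>K\<in>Cl. x j \<in> K \<and> x j \<in> K"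
    using x blockI unfolding tup_def by auto
qed

lemma Delta_out:
  "x \<notin> tup G (card A) \<or> y \<notin> tup G (card ({1..n} - A)) \<Longrightarrow> Delta G \<iota> \<alpha> \<alpha> n A \<psi> x y = 0"
  unfolding Delta_def Let_def by auto

lemma Delta_inv_y:
  assumes A: "A \<subseteq> {1..n}" and psi: "\<psi> \<in> Hn G Cl n"
    and y: "y \<in> tup G (card ({1..n} - A))" and y': "y' \<in> tup G (card ({1..n} - A))"
    and e: "\<forall>j<card ({1..n} - A) - 1. \<exists>K\<in>Cl. y j \<in> K \<and> y' j \<in> K"
  shows "Delta G \<iota> \<alpha> \<alpha> n A \<psi> x y = Delta G \<iota> \<alpha> \<alpha> n A \<psi> x y'"
proof (cases "x \<in> tup G (card A)")
  case False then show ?thesis using Delta_out by metis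
next
  case True
  have fA: "finite A" using finite_subset[OF A] by simp
  show ?thesis
    unfolding Delta_Phi[OF fin A True y] Delta_Phi[OF fin A True y']
    by (rule Phi_inv[OF A psi rho_blk_refl[OF fA True] rho_blk[OF _ y y' e]]) simp
qed

lemma Delta_inv_x:
  assumes A: "A \<subseteq> {1..n}" and psi: "\<psi> \<in> Hn G Cl n"
    and x: "x \<in> tup G (card A)" and x': "x' \<in> tup G (card A)"
    and e: "\<forall>j<card A - 1. \<exists>K\<in>Cl. x j \<in> K \<and> x' j \<in> K"
  shows "Delta G \<iota> \<alpha> \<alpha> n A \<psi> x y = Delta G \<iota> \<alpha> \<alpha> n A \<psi> x' y"
proof (cases "y \<in> tup G (card ({1..n} - A))")
  case False then show ?thesis using Delta_out by metis
next
  case True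
  have fA: "finite A" using finite_subset[OF A] by simp
  show ?thesis
    unfolding Delta_Phi[OF fin A x True] Delta_Phi[OF fin A x' True]
    by (rule Phi_inv[OF A psi rho_blk[OF fA x x' e] rho_blk_refl[OF _ True]]) simp
qed

lemma M1:
  assumes A: "A \<subseteq> {1..n}" and psi: "\<psi> \<in> Hn G Cl n"
  shows "(\<lambda>y. Delta G \<iota> \<alpha> \<alpha> n A \<psi> x y) \<in> Hn G Cl (n - card A)"
  unfolding Hn_def card_B[OF A, symmetric]
  using Delta_out Delta_inv_y[OF A psi] by blast

lemma M2:
  assumes A: "A \<subseteq> {1..n}" and psi: "\<psi> \<in> Hn G Cl n"
  shows "(\<lambda>x. alpha_char G Cl \<alpha> (n - card A) (\<lambda>y. Delta G \<iota> \<alpha> \<alpha> n A \<psi> x y)) \<in> Hn G Cl (card A)"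
proof -
  have out: "alpha_char G Cl \<alpha> (n - card A) (\<lambda>y. Delta G \<iota> \<alpha> \<alpha> n A \<psi> x y) = 0"
    if "x \<notin> tup G (card A)" for x
  proof -
    have "(\<lambda>y. Delta G \<iota> \<alpha> \<alpha> n A \<psi> x y) = (\<lambda>_. 0)" using Delta_out that by blast
    then show ?thesis by (simp add: alpha_char_zero)
  qed
  have inv: "(\<lambda>y. Delta G \<iota> \<alpha> \<alpha> n A \<psi> x y) = (\<lambda>y. Delta G \<iota> \<alpha> \<alpha> n A \<psi> x' y)"
    if "x \<in> tup G (card A)" "x' \<in> tup G (card A)" "\<forall>j<card A - 1. \<exists>K\<in>Cl. x j \<in> K \<and> x' j \<in> K" for x x'
    using Delta_inv_x[OF A psi that] by blast
  show ?thesis unfolding Hn_def using out inv by auto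
qed

end




lemma triple_swap:
  fixes a :: "'u \<Rightarrow> 'w \<Rightarrow> complex" and b :: "'v \<Rightarrow> 'w \<Rightarrow> complex"
  shows "(\<Sum>u\<in>U. \<Sum>v\<in>V. (\<Sum>w\<in>W. a u w * b v w * Q w) / K) = (\<Sum>w\<in>W. Q w * (\<Sum>u\<in>U. a u w) * (\<Sum>v\<in>V. b v w)) / K"
proof -
  have "(\<Sum>u\<in>U. \<Sum>v\<in>V. (\<Sum>w\<in>W. a u w * b v w * Q w) / K) = (\<Sum>u\<in>U. \<Sum>v\<in>V. \<Sum>w\<in>W. a u w * b v w * Q w) / K"
    by (simp add: sum_divide_distrib)
  also have "(\<Sum>u\<in>U. \<Sum>v\<in>V. \<Sum>w\<in>W. a u w * b v w * Q w) = (\<Sum>u\<in>U. \<Sum>w\<in>W. \<Sum>v\<in>V. a u w * b v w * Q w)"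
    by (rule sum.cong[OF refl]) (rule sum.swap)
  also have "\<dots> = (\<Sum>w\<in>W. \<Sum>u\<in>U. \<Sum>v\<in>V. a u w * b v w * Q w)" by (rule sum.swap)
  also have "\<dots> = (\<Sum>w\<in>W. Q w * (\<Sum>u\<in>U. a u w) * (\<Sum>v\<in>V. b v w))"
    by (simp add: sum_distrib_left sum_distrib_right mult_ac)
  finally show ?thesis .
qed

context
  fixes G :: "('a, 'b) monoid_scheme" and Cl :: "'a set set" and \<iota> \<alpha> :: "'a \<Rightarrow> complex"
  assumes fin: "finite (carrier G)" and part: "partition_on (carrier G) Cl"
    and iota: "\<iota> \<in> scf G Cl" and alpha: "\<alpha> \<in> scf G Cl"
    and ipN: "(\<Sum>t\<in>carrier G. \<iota> t * cnj (\<alpha> t)) = of_nat (card (carrier G))"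
begin

lemmas M1' = M1[OF fin part iota alpha]
lemmas M2' = M2[OF fin part iota alpha]

lemma alpha_char_tupJ:
  assumes psi: "\<psi> \<in> Hn G Cl n"
  shows "alpha_char G Cl \<alpha> n \<psi> = (\<Sum>w\<in>PiE {1..n-1} (\<lambda>_. carrier G).
     \<psi> (ex G n w) * (\<Prod>j\<in>{1..n-1}. cnj (\<alpha> (w j)))) / of_nat (card (carrier G)) ^ (n - 1)"
proof -
  have "(\<Sum>g\<in>tup G n. \<psi> g * cnj (\<Prod>j<n-1. \<alpha> (g j))) =
     (\<Sum>g\<in>tup G n. (\<lambda>w. \<psi> (ex G n w) * (\<Prod>j\<in>{1..n-1}. cnj (\<alpha> (w j)))) (restrict (\<lambda>j. g (j - 1)) {1..n-1}))"
  proof (rule sum.cong[OF refl])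
    fix g assume g: "g \<in> tup G n"
    let ?w = "restrict (\<lambda>j. g (j - 1)) {1..n-1}"
    have e: "ex G n ?w = g"
    proof
      fix i show "ex G n ?w i = g i" using g by (auto simp: ex_def tup_def)
    qed
    have p: "(\<Prod>j<n-1. \<alpha> (g j)) = (\<Prod>j\<in>{1..n-1}. \<alpha> (g (j - 1)))"
      using prod.reindex_bij_betw[OF bij_minus1, of "\<lambda>i. \<alpha> (g i)" n] by simp
    show "\<psi> g * cnj (\<Prod>j<n-1. \<alpha> (g j)) = (\<lambda>w. \<psi> (ex G n w) * (\<Prod>j\<in>{1..n-1}. cnj (\<alpha> (w j)))) ?w"
      unfolding p e by simp
  qed
  also have "\<dots> = (\<Sum>w\<in>PiE {1..n-1} (\<lambda>_. carrier G). \<psi> (ex G n w) * (\<Prod>j\<in>{1..n-1}. cnj (\<alpha> (w j))))"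
    by (rule sum_tup[OF bij_minus1])
  finally show ?thesis using psi by (simp add: alpha_char_def)
qed

lemma MC:
  assumes ne: "carrier G \<noteq> {}" and A: "A \<subseteq> {1..n}" and psi: "\<psi> \<in> Hn G Cl n"
  shows "alpha_char G Cl \<alpha> (card A) (\<lambda>x. alpha_char G Cl \<alpha> (n - card A) (\<lambda>y. Delta G \<iota> \<alpha> \<alpha> n A \<psi> x y))
       = alpha_char G Cl \<alpha> n \<psi>"
proof -
  define B where "B = {1..n} - A"
  define N where "N = (of_nat (card (carrier G)) :: complex)"
  define k where "k = card A"
  define m where "m = card B"
  define J where "J = {1..n-1}"
  define C where "C = CS n A"
  have fA: "finite A" using finite_subset[OF A] by simp
  have fB: "finite B" by (simp add: B_def)
  have Bsub: "B \<subseteq> {1..n}" by (auto simp: B_def)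
  have mk: "n - card A = m" unfolding m_def B_def using fA A by (simp add: card_Diff_subset)
  have N0: "N \<noteq> 0" unfolding N_def using fin ne by (simp add: card_gt_0_iff)
  let ?D = "\<lambda>x y. Delta G \<iota> \<alpha> \<alpha> n A \<psi> x y"
  let ?pa = "\<lambda>u. \<Prod>a\<in>XS A. cnj (\<alpha> (u a))"
  let ?pb = "\<lambda>v. \<Prod>b\<in>XS B. cnj (\<alpha> (v b))"
  let ?Phi = "Phi G \<iota> \<alpha> \<psi> n A"
  have inner: "alpha_char G Cl \<alpha> (n - card A) (\<lambda>y. ?D x y) =
     (\<Sum>v\<in>PiE (XS B) (\<lambda>_. carrier G). ?Phi (rho A x) v * ?pb v) / N ^ (m - 1)"
    if x: "x \<in> tup G (card A)" for x
  proof -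
    have "alpha_char G Cl \<alpha> (n - card A) (\<lambda>y. ?D x y) =
       (\<Sum>y\<in>tup G m. ?D x y * cnj (\<Prod>j<m-1. \<alpha> (y j))) / N ^ (m - 1)"
      using M1'[OF A psi, of x] unfolding mk by (simp add: alpha_char_def N_def)
    also have "(\<Sum>y\<in>tup G m. ?D x y * cnj (\<Prod>j<m-1. \<alpha> (y j))) =
        (\<Sum>y\<in>tup G m. (\<lambda>v. ?Phi (rho A x) v * ?pb v) (restrict (\<lambda>a. y (pos B a)) (XS B)))"
    proof (rule sum.cong[OF refl])
      fix y assume y: "y \<in> tup G m"
      have d: "?D x y = ?Phi (rho A x) (rho B y)"
        unfolding B_def by (rule Delta_Phi[OF fin A x]) (use y in \<open>simp add: m_def B_def\<close>)
      have p: "(\<Prod>j<m-1. \<alpha> (y j)) = (\<Prod>b\<in>XS B. \<alpha> (y (pos B b)))"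
        using prod.reindex_bij_betw[OF pos_bij[OF fB], of "\<lambda>i. \<alpha> (y i)"] by (simp add: m_def)
      show "?D x y * cnj (\<Prod>j<m-1. \<alpha> (y j)) = (\<lambda>v. ?Phi (rho A x) v * ?pb v) (restrict (\<lambda>a. y (pos B a)) (XS B))"
        unfolding d p by (simp add: rho_def)
    qed
    also have "\<dots> = (\<Sum>v\<in>PiE (XS B) (\<lambda>_. carrier G). ?Phi (rho A x) v * ?pb v)"
      by (rule sum_tup) (use pos_bij[OF fB] in \<open>simp add: m_def\<close>)
    finally show ?thesis .
  qed
  let ?I = "\<lambda>u. (\<Sum>v\<in>PiE (XS B) (\<lambda>_. carrier G). ?Phi u v * ?pb v) / N ^ (m - 1)"
  have outer: "alpha_char G Cl \<alpha> (card A) (\<lambda>x. alpha_char G Cl \<alpha> (n - card A) (\<lambda>y. ?D x y)) =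
     (\<Sum>u\<in>PiE (XS A) (\<lambda>_. carrier G). ?I u * ?pa u) / N ^ (k - 1)"
  proof -
    have "alpha_char G Cl \<alpha> (card A) (\<lambda>x. alpha_char G Cl \<alpha> (n - card A) (\<lambda>y. ?D x y)) =
      (\<Sum>x\<in>tup G k. alpha_char G Cl \<alpha> (n - card A) (\<lambda>y. ?D x y) * cnj (\<Prod>j<k-1. \<alpha> (x j))) / N ^ (k - 1)"
      using M2'[OF A psi] by (simp add: alpha_char_def N_def k_def)
    also have "(\<Sum>x\<in>tup G k. alpha_char G Cl \<alpha> (n - card A) (\<lambda>y. ?D x y) * cnj (\<Prod>j<k-1. \<alpha> (x j))) =
        (\<Sum>x\<in>tup G k. (\<lambda>u. ?I u * ?pa u) (restrict (\<lambda>a. x (pos A a)) (XS A)))"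
    proof (rule sum.cong[OF refl])
      fix x assume x: "x \<in> tup G k"
      have p: "(\<Prod>j<k-1. \<alpha> (x j)) = (\<Prod>a\<in>XS A. \<alpha> (x (pos A a)))"
        using prod.reindex_bij_betw[OF pos_bij[OF fA], of "\<lambda>i. \<alpha> (x i)"] by (simp add: k_def)
      show "alpha_char G Cl \<alpha> (n - card A) (\<lambda>y. ?D x y) * cnj (\<Prod>j<k-1. \<alpha> (x j)) =
          (\<lambda>u. ?I u * ?pa u) (restrict (\<lambda>a. x (pos A a)) (XS A))"
        unfolding inner[OF x[unfolded k_def]] p by (simp add: rho_def)
    qed
    also have "\<dots> = (\<Sum>u\<in>PiE (XS A) (\<lambda>_. carrier G). ?I u * ?pa u)"
      by (rule sum_tup) (use pos_bij[OF fA] in \<open>simp add: k_def\<close>)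
    finally show ?thesis .
  qed
  define a where "a = (\<lambda>u w. if (\<forall>j\<in>TS A. u j = w j) then (\<Prod>j\<in>TS A. cnj (\<alpha> (u j))) * (\<Prod>j\<in>FS A. \<iota> (u j) * cnj (\<alpha> (u j))) else (0::complex))"
  define b where "b = (\<lambda>v w. if (\<forall>j\<in>TS B. v j = w j) then (\<Prod>j\<in>TS B. cnj (\<alpha> (v j))) * (\<Prod>j\<in>FS B. \<iota> (v j) * cnj (\<alpha> (v j))) else (0::complex))"
  define Q where "Q = (\<lambda>w. \<psi> (ex G n w) * (\<Prod>j\<in>C. cnj (\<alpha> (w j))))"
  have fTA: "finite (TS A)" "finite (FS A)" using fA by (auto simp: TS_def FS_def)
  have fTB: "finite (TS B)" "finite (FS B)" using fB by (auto simp: TS_def FS_def)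
  have fC: "finite C" by (simp add: C_def CS_def)
  have splitA: "\<And>f. (\<Prod>j\<in>XS A. f j) = (\<Prod>j\<in>TS A. f j) * (\<Prod>j\<in>FS A. f j)"
    unfolding XS_split[OF fA] by (rule prod.union_disjoint[OF fTA TS_FS_disj])
  have splitB: "\<And>f. (\<Prod>j\<in>XS B. f j) = (\<Prod>j\<in>TS B. f j) * (\<Prod>j\<in>FS B. f j)"
    unfolding XS_split[OF fB] by (rule prod.union_disjoint[OF fTB TS_FS_disj])
  have Jsplit: "J = (TS A \<union> TS B) \<union> C" unfolding J_def C_def B_def by (rule J_split[OF A])
  have dTT: "TS A \<inter> TS B = {}" unfolding B_def by (rule TS_disj)
  have dTC: "(TS A \<union> TS B) \<inter> C = {}" unfolding B_def C_def by (rule CS_disj)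
  have splitJ: "\<And>f. (\<Prod>j\<in>J. f j) = (\<Prod>j\<in>TS A. f j) * (\<Prod>j\<in>TS B. f j) * (\<Prod>j\<in>C. f j)"
    unfolding Jsplit using fTA fTB fC dTT dTC by (simp add: prod.union_disjoint)
  have phi: "?Phi u v * ?pb v * ?pa u = (\<Sum>w\<in>PiE J (\<lambda>_. carrier G). a u w * b v w * Q w) / N ^ card C" for u v
  proof -
    have W: "Wsum G \<psi> \<alpha> n A u v = (\<Sum>w\<in>PiE J (\<lambda>_. carrier G).
       if (\<forall>j\<in>TS A. w j = u j) \<and> (\<forall>j\<in>TS B. w j = v j) then Q w else 0)"
      unfolding Wsum_def Q_def J_def C_def B_def ..
    have "?Phi u v * ?pb v * ?pa u = (\<Prod>a\<in>FS A. \<iota> (u a)) * (\<Prod>b\<in>FS B. \<iota> (v b)) * ?pb v * ?pa u *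
        Wsum G \<psi> \<alpha> n A u v / N ^ card C"
      unfolding Phi_def B_def N_def C_def by simp
    also have "\<dots> = (\<Sum>w\<in>PiE J (\<lambda>_. carrier G). (\<Prod>a\<in>FS A. \<iota> (u a)) * (\<Prod>b\<in>FS B. \<iota> (v b)) * ?pb v * ?pa u *
        (if (\<forall>j\<in>TS A. w j = u j) \<and> (\<forall>j\<in>TS B. w j = v j) then Q w else 0)) / N ^ card C"
      unfolding W by (simp add: sum_distrib_left)
    also have "(\<Sum>w\<in>PiE J (\<lambda>_. carrier G). (\<Prod>a\<in>FS A. \<iota> (u a)) * (\<Prod>b\<in>FS B. \<iota> (v b)) * ?pb v * ?pa u *
        (if (\<forall>j\<in>TS A. w j = u j) \<and> (\<forall>j\<in>TS B. w j = v j) then Q w else 0)) =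
        (\<Sum>w\<in>PiE J (\<lambda>_. carrier G). a u w * b v w * Q w)"
    proof (rule sum.cong[OF refl])
      fix w
      have e1: "(\<forall>j\<in>TS A. w j = u j) = (\<forall>j\<in>TS A. u j = w j)" by auto
      have e2: "(\<forall>j\<in>TS B. w j = v j) = (\<forall>j\<in>TS B. v j = w j)" by auto
      have pa: "?pa u = (\<Prod>j\<in>TS A. cnj (\<alpha> (u j))) * (\<Prod>j\<in>FS A. cnj (\<alpha> (u j)))" by (rule splitA)
      have pb: "?pb v = (\<Prod>j\<in>TS B. cnj (\<alpha> (v j))) * (\<Prod>j\<in>FS B. cnj (\<alpha> (v j)))" by (rule splitB)
      have da: "(\<Prod>j\<in>FS A. \<iota> (u j) * cnj (\<alpha> (u j))) = (\<Prod>j\<in>FS A. \<iota> (u j)) * (\<Prod>j\<in>FS A. cnj (\<alpha> (u j)))"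
        by (rule prod.distrib)
      have db: "(\<Prod>j\<in>FS B. \<iota> (v j) * cnj (\<alpha> (v j))) = (\<Prod>j\<in>FS B. \<iota> (v j)) * (\<Prod>j\<in>FS B. cnj (\<alpha> (v j)))"
        by (rule prod.distrib)
      show "(\<Prod>a\<in>FS A. \<iota> (u a)) * (\<Prod>b\<in>FS B. \<iota> (v b)) * ?pb v * ?pa u *
        (if (\<forall>j\<in>TS A. w j = u j) \<and> (\<forall>j\<in>TS B. w j = v j) then Q w else 0) = a u w * b v w * Q w"
        unfolding a_def b_def e1 e2 pa pb da db by (simp add: mult_ac)
    qed
    finally show ?thesis .
  qed
  have sa: "(\<Sum>u\<in>PiE (XS A) (\<lambda>_. carrier G). a u w) = (\<Prod>j\<in>TS A. cnj (\<alpha> (w j))) * N ^ card (FS A)"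
    if w: "w \<in> PiE J (\<lambda>_. carrier G)" for w
  proof -
    have wc: "\<And>j. j \<in> TS A \<Longrightarrow> w j \<in> carrier G" using w Jsplit by auto
    have "(\<Sum>u\<in>PiE (XS A) (\<lambda>_. carrier G). a u w) = (\<Prod>j\<in>TS A. cnj (\<alpha> (w j))) * (\<Prod>j\<in>FS A. \<Sum>t\<in>carrier G. \<iota> t * cnj (\<alpha> t))"
      unfolding a_def XS_split[OF fA]
      by (rule sum_PiE_fix[OF fTA fin TS_FS_disj wc, where f = "\<lambda>_ t. cnj (\<alpha> t)" and h = "\<lambda>_ t. \<iota> t * cnj (\<alpha> t)"])
    then show ?thesis using ipN by (simp add: N_def)
  qed
  have sb: "(\<Sum>v\<in>PiE (XS B) (\<lambda>_. carrier G). b v w) = (\<Prod>j\<in>TS B. cnj (\<alpha> (w j))) * N ^ card (FS B)"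
    if w: "w \<in> PiE J (\<lambda>_. carrier G)" for w
  proof -
    have wc: "\<And>j. j \<in> TS B \<Longrightarrow> w j \<in> carrier G" using w Jsplit by auto
    have "(\<Sum>v\<in>PiE (XS B) (\<lambda>_. carrier G). b v w) = (\<Prod>j\<in>TS B. cnj (\<alpha> (w j))) * (\<Prod>j\<in>FS B. \<Sum>t\<in>carrier G. \<iota> t * cnj (\<alpha> t))"
      unfolding b_def XS_split[OF fB]
      by (rule sum_PiE_fix[OF fTB fin TS_FS_disj wc, where f = "\<lambda>_ t. cnj (\<alpha> t)" and h = "\<lambda>_ t. \<iota> t * cnj (\<alpha> t)"])
    then show ?thesis using ipN by (simp add: N_def)
  qed
  define X where "X = (\<Sum>w\<in>PiE J (\<lambda>_. carrier G). \<psi> (ex G n w) * (\<Prod>j\<in>J. cnj (\<alpha> (w j))))"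
  have "(\<Sum>u\<in>PiE (XS A) (\<lambda>_. carrier G). ?I u * ?pa u) =
      (\<Sum>u\<in>PiE (XS A) (\<lambda>_. carrier G). \<Sum>v\<in>PiE (XS B) (\<lambda>_. carrier G). (?Phi u v * ?pb v * ?pa u) / N ^ (m - 1))"
    by (simp add: sum_divide_distrib sum_distrib_right)
  also have "\<dots> = (\<Sum>u\<in>PiE (XS A) (\<lambda>_. carrier G). \<Sum>v\<in>PiE (XS B) (\<lambda>_. carrier G).
      (\<Sum>w\<in>PiE J (\<lambda>_. carrier G). a u w * b v w * Q w) / (N ^ card C * N ^ (m - 1)))"
    unfolding phi by simp
  also have "\<dots> = (\<Sum>w\<in>PiE J (\<lambda>_. carrier G). Q w * (\<Sum>u\<in>PiE (XS A) (\<lambda>_. carrier G). a u w) *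
      (\<Sum>v\<in>PiE (XS B) (\<lambda>_. carrier G). b v w)) / (N ^ card C * N ^ (m - 1))"
    by (rule triple_swap)
  also have "(\<Sum>w\<in>PiE J (\<lambda>_. carrier G). Q w * (\<Sum>u\<in>PiE (XS A) (\<lambda>_. carrier G). a u w) *
      (\<Sum>v\<in>PiE (XS B) (\<lambda>_. carrier G). b v w)) = X * N ^ (card (FS A) + card (FS B))"
  proof -
    have "(\<Sum>w\<in>PiE J (\<lambda>_. carrier G). Q w * (\<Sum>u\<in>PiE (XS A) (\<lambda>_. carrier G). a u w) *
      (\<Sum>v\<in>PiE (XS B) (\<lambda>_. carrier G). b v w)) =
      (\<Sum>w\<in>PiE J (\<lambda>_. carrier G). \<psi> (ex G n w) * (\<Prod>j\<in>J. cnj (\<alpha> (w j))) * N ^ (card (FS A) + card (FS B)))"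
    proof (rule sum.cong[OF refl])
      fix w assume w: "w \<in> PiE J (\<lambda>_. carrier G)"
      show "Q w * (\<Sum>u\<in>PiE (XS A) (\<lambda>_. carrier G). a u w) * (\<Sum>v\<in>PiE (XS B) (\<lambda>_. carrier G). b v w) =
        \<psi> (ex G n w) * (\<Prod>j\<in>J. cnj (\<alpha> (w j))) * N ^ (card (FS A) + card (FS B))"
        unfolding sa[OF w] sb[OF w] splitJ Q_def by (simp add: power_add mult_ac)
    qed
    then show ?thesis unfolding X_def by (simp add: sum_distrib_right)
  qed
  finally have L: "(\<Sum>u\<in>PiE (XS A) (\<lambda>_. carrier G). ?I u * ?pa u) =
    X * N ^ (card (FS A) + card (FS B)) / (N ^ card C * N ^ (m - 1))" .
  have ck: "k - 1 = card (TS A) + card (FS A)"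
    using card_XS[OF fA] XS_split[OF fA] card_Un_disjoint[OF fTA TS_FS_disj] by (simp add: k_def)
  have cm: "m - 1 = card (TS B) + card (FS B)"
    using card_XS[OF fB] XS_split[OF fB] card_Un_disjoint[OF fTB TS_FS_disj] by (simp add: m_def)
  have cn: "n - 1 = card (TS A) + card (TS B) + card C"
  proof -
    have "card J = n - 1" by (simp add: J_def)
    moreover have "card J = card (TS A) + card (TS B) + card C"
      unfolding Jsplit using fTA fTB fC dTT dTC by (simp add: card_Un_disjoint)
    ultimately show ?thesis by simp
  qed
  have R: "alpha_char G Cl \<alpha> n \<psi> = X / N ^ (n - 1)"
    unfolding alpha_char_tupJ[OF psi] X_def J_def N_def ..
  have ex: "card C + (m - 1) + (k - 1) = (n - 1) + (card (FS A) + card (FS B))"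
    using ck cm cn by simp
  have "X * N ^ (card (FS A) + card (FS B)) / (N ^ card C * N ^ (m - 1)) / N ^ (k - 1) = X / N ^ (n - 1)"
  proof -
    have "N ^ card C * N ^ (m - 1) * N ^ (k - 1) = N ^ (n - 1) * N ^ (card (FS A) + card (FS B))"
      unfolding power_add[symmetric] ex ..
    then show ?thesis using N0 by (simp add: field_simps)
  qed
  then show ?thesis unfolding outer L R .
qed

end


lemma Hn_add: "f \<in> Hn G Cl n \<Longrightarrow> h \<in> Hn G Cl n \<Longrightarrow> (\<lambda>t. f t + h t) \<in> Hn G Cl n"
  unfolding Hn_def by auto

lemma Hn_smult: "f \<in> Hn G Cl n \<Longrightarrow> (\<lambda>t. c * f t) \<in> Hn G Cl n"
  unfolding Hn_def by auto

lemma Hn_smult_iff: "c \<noteq> 0 \<Longrightarrow> (\<lambda>t. c * f t) \<in> Hn G Cl n \<longleftrightarrow> f \<in> Hn G Cl n"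
  unfolding Hn_def by auto

lemma alpha_char_scale:
  assumes "c \<noteq> 0"
  shows "alpha_char G Cl \<alpha> m (\<lambda>x. c * f x) = c * alpha_char G Cl \<alpha> m f"
  using assms by (simp add: alpha_char_def Hn_smult_iff sum_distrib_left mult_ac)

lemma graded_zero: "graded_functional G Cl \<xi> \<Longrightarrow> \<xi> n (\<lambda>_. 0) = 0"
proof -
  assume g: "graded_functional G Cl \<xi>"
  have z: "(\<lambda>_. 0) \<in> Hn G Cl n" by (simp add: Hn_def)
  have h: "\<forall>c. \<forall>f\<in>Hn G Cl n. \<xi> n (\<lambda>t. c * f t) = c * \<xi> n f"
    using g unfolding graded_functional_def by blast
  show ?thesis using bspec[OF spec[OF h, of 0] z] by simp
qed

lemma tup0: "tup G 0 = {\<lambda>_. \<one>\<^bsub>G\<^esub>}"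
  by (auto simp: tup_def)

lemma alpha_char0: "f \<in> Hn G Cl 0 \<Longrightarrow> alpha_char G Cl \<alpha> 0 f = f (\<lambda>_. \<one>\<^bsub>G\<^esub>)"
  by (simp add: alpha_char_def tup0)

lemma minus_one_pow_diff: "k \<le> n \<Longrightarrow> (-1::complex) ^ (n - k) = (-1) ^ n * (-1) ^ k"
proof -
  assume "k \<le> n"
  then have "(-1::complex) ^ n = (-1) ^ (n - k) * (-1) ^ k" by (simp add: power_add[symmetric])
  then have "(-1::complex) ^ n * (-1) ^ k = (-1) ^ (n - k) * ((-1) ^ k * (-1) ^ k)" by simp
  also have "(-1::complex) ^ k * (-1) ^ k = 1" by (simp add: power_add[symmetric] flip: power_mult_distrib)
  finally show ?thesis by simp
qed

lemma pos_interval: assumes "j \<in> {1..n}" shows "pos {1..n} j = j - 1"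
proof -
  have "{b \<in> {1..n}. b < j} = {1..<j}" using assms by auto
  then show ?thesis unfolding pos_def by simp
qed

lemma Delta_empty:
  assumes f: "f \<in> Hn G Cl n"
  shows "Delta G \<iota> \<alpha> \<beta> n {} f (\<lambda>_. \<one>\<^bsub>G\<^esub>) y = f y"
proof (cases "y \<in> tup G n")
  case False
  then have "f y = 0" using f by (simp add: Hn_def)
  then show ?thesis using False by (simp add: Delta_def)
next
  case True
  have x0: "(\<lambda>_. \<one>\<^bsub>G\<^esub>) \<in> tup G (card ({}::nat set))" by (simp add: tup0)
  have e1: "{b \<in> {1..n}. Suc b \<notin> {1..n} \<and> b < Max {1..n}} = {}"
  proof (cases "n = 0")
    case True then show ?thesis by simp
  next
    case False
    then have "Max {1..n} = n" by (simp add: Max_eq_iff)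
    then show ?thesis by auto
  qed
  have e2: "{j \<in> {1..n-1}. (j \<in> ({}::nat set)) \<noteq> (Suc j \<in> {})} = {}" by simp
  have e3: "{g \<in> tup G n. \<forall>j\<in>{1..n-1}. (j \<in> ({}::nat set)) = (Suc j \<in> {}) \<longrightarrow>
       g (j - 1) = (if j \<in> {} then (\<lambda>_. \<one>\<^bsub>G\<^esub>) (pos {} j) else y (pos ({1..n} - {}) j))} = {y}"
  proof
    show "{y} \<subseteq> {g \<in> tup G n. \<forall>j\<in>{1..n-1}. (j \<in> ({}::nat set)) = (Suc j \<in> {}) \<longrightarrow>
       g (j - 1) = (if j \<in> {} then (\<lambda>_. \<one>\<^bsub>G\<^esub>) (pos {} j) else y (pos ({1..n} - {}) j))}"
      using True pos_interval[of _ n] by auto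
    show "{g \<in> tup G n. \<forall>j\<in>{1..n-1}. (j \<in> ({}::nat set)) = (Suc j \<in> {}) \<longrightarrow>
       g (j - 1) = (if j \<in> {} then (\<lambda>_. \<one>\<^bsub>G\<^esub>) (pos {} j) else y (pos ({1..n} - {}) j))} \<subseteq> {y}"
    proof
      fix g assume g: "g \<in> {g \<in> tup G n. \<forall>j\<in>{1..n-1}. (j \<in> ({}::nat set)) = (Suc j \<in> {}) \<longrightarrow>
       g (j - 1) = (if j \<in> {} then (\<lambda>_. \<one>\<^bsub>G\<^esub>) (pos {} j) else y (pos ({1..n} - {}) j))}"
      have "g i = y i" for i
      proof (cases "i < n - 1")
        case True
        then have si: "Suc i \<in> {1..n-1}" "Suc i \<in> {1..n}" by auto
        have "\<forall>j\<in>{1..n-1}. g (j - 1) = y (pos {1..n} j)" using g by simp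
        from bspec[OF this si(1)] show ?thesis using pos_interval[OF si(2)] by simp
      next
        case False
        then show ?thesis using g \<open>y \<in> tup G n\<close> by (auto simp: tup_def)
      qed
      then show "g \<in> {y}" by auto
    qed
  qed
  have yn: "y \<in> tup G (card ({1..n} - {}))" using True by simp
  show ?thesis
  proof -
    have e3': "{g \<in> tup G n. \<forall>j\<in>{1..n-1}. g (j - 1) = y (pos {1..n} j)} = {y}"
      using e3 by simp
    show ?thesis
      unfolding Delta_def Let_def e2 Diff_empty e1
      using x0 True e3' by simp
  qed
qed


theorem mainTheorem8:
  fixes G :: "('a, 'b) monoid_scheme" and Cl :: "'a set set" and Ch :: "('a \<Rightarrow> complex) set"
    and \<iota> \<alpha> :: "'a \<Rightarrow> complex"
  assumes "group G" and "finite (carrier G)"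
    and "supercharacter_theory G Cl Ch"
    and "\<iota> \<in> scf G Cl" and "\<alpha> \<in> scf G Cl"
    and "ip G \<iota> \<alpha> = 1"
  shows "\<forall>n. \<forall>\<gamma>\<in>Hn G Cl n.
           conv_inv G Cl \<iota> \<alpha> \<alpha> (alpha_char G Cl \<alpha>) n \<gamma> = (-1) ^ n * alpha_char G Cl \<alpha> n \<gamma>"
proof -
  note fin = assms(2) and iota = assms(4) and alpha = assms(5)
  have part: "partition_on (carrier G) Cl" using assms(3) unfolding supercharacter_theory_def by blast
  have ne: "carrier G \<noteq> {}" using monoid.one_closed[OF group.is_monoid[OF assms(1)]] by blast
  have N0: "(of_nat (card (carrier G)) :: complex) \<noteq> 0" using fin ne by (simp add: card_gt_0_iff)
  have ipN: "(\<Sum>t\<in>carrier G. \<iota> t * cnj (\<alpha> t)) = of_nat (card (carrier G))"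
    using assms(6) N0 unfolding ip_def by (simp add: field_simps)
  define \<zeta> where "\<zeta> = alpha_char G Cl \<alpha>"
  define \<xi>0 where "\<xi>0 = (\<lambda>n f. (-1::complex) ^ n * \<zeta> n f)"
  have MC': "\<zeta> (card A) (\<lambda>x. \<zeta> (n - card A) (\<lambda>y. Delta G \<iota> \<alpha> \<alpha> n A \<psi> x y)) = \<zeta> n \<psi>"
    if "A \<subseteq> {1..n}" "\<psi> \<in> Hn G Cl n" for A n \<psi>
    unfolding \<zeta>_def by (rule MC[OF fin part iota alpha ipN ne that])
  have gf0: "graded_functional G Cl \<xi>0"
    unfolding graded_functional_def
  proof (intro allI conjI ballI)
    fix n f
    show "f \<notin> Hn G Cl n \<longrightarrow> \<xi>0 n f = 0" by (simp add: \<xi>0_def \<zeta>_def alpha_char_def)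
  next
    fix n f h assume f: "f \<in> Hn G Cl n" and h: "h \<in> Hn G Cl n"
    show "\<xi>0 n (\<lambda>t. f t + h t) = \<xi>0 n f + \<xi>0 n h"
      using f h Hn_add[OF f h]
      by (simp add: \<xi>0_def \<zeta>_def alpha_char_def sum.distrib add_divide_distrib ring_distribs)
  next
    fix n c f assume f: "f \<in> Hn G Cl n"
    show "\<xi>0 n (\<lambda>t. c * f t) = c * \<xi>0 n f"
      using f Hn_smult[OF f, of c]
      by (simp add: \<xi>0_def \<zeta>_def alpha_char_def sum_distrib_left mult_ac)
  qed
  have fP: "finite {1..n}" for n :: nat by simp
  have altn: "(\<Sum>A\<in>Pow {1..n}. (-1::complex) ^ card A) = (if n = 0 then 1 else 0)" for n :: nat
    using alt_sum_Pow[OF fP[of n]] by simp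
  have z0: "\<zeta> 0 \<psi> = counit G 0 \<psi>" if "\<psi> \<in> Hn G Cl 0" for \<psi>
    using alpha_char0[OF that] by (simp add: \<zeta>_def counit_def)
  have conv1: "conv G \<iota> \<alpha> \<alpha> \<zeta> \<xi>0 n \<psi> = counit G n \<psi>" if psi: "\<psi> \<in> Hn G Cl n" for n \<psi>
  proof -
    have "conv G \<iota> \<alpha> \<alpha> \<zeta> \<xi>0 n \<psi> = (\<Sum>A\<in>Pow {1..n}. (-1) ^ n * \<zeta> n \<psi> * (-1) ^ card A)"
      unfolding conv_def
    proof (rule sum.cong[OF refl])
      fix A assume A: "A \<in> Pow {1..n}"
      then have cA: "card A \<le> n" using card_mono[OF fP[of n]] by fastforce
      have "\<zeta> (card A) (\<lambda>x. \<xi>0 (n - card A) (\<lambda>y. Delta G \<iota> \<alpha> \<alpha> n A \<psi> x y)) =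
        (-1) ^ (n - card A) * \<zeta> (card A) (\<lambda>x. \<zeta> (n - card A) (\<lambda>y. Delta G \<iota> \<alpha> \<alpha> n A \<psi> x y))"
        unfolding \<xi>0_def \<zeta>_def by (rule alpha_char_scale) simp
      also have "\<dots> = (-1) ^ n * \<zeta> n \<psi> * (-1) ^ card A"
        using MC'[of A n \<psi>] A psi minus_one_pow_diff[OF cA] by simp
      finally show "\<zeta> (card A) (\<lambda>x. \<xi>0 (n - card A) (\<lambda>y. Delta G \<iota> \<alpha> \<alpha> n A \<psi> x y)) =
        (-1) ^ n * \<zeta> n \<psi> * (-1) ^ card A" .
    qed
    also have "\<dots> = (-1) ^ n * \<zeta> n \<psi> * (\<Sum>A\<in>Pow {1..n}. (-1::complex) ^ card A)"
      by (simp add: sum_distrib_left)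
    also have "\<dots> = (-1) ^ n * \<zeta> n \<psi> * (if n = 0 then 1 else 0)"
      unfolding altn ..
    also have "\<dots> = counit G n \<psi>"
      using z0 psi by (cases "n = 0") (auto simp: counit_def)
    finally show ?thesis .
  qed
  have conv2: "conv G \<iota> \<alpha> \<alpha> \<xi>0 \<zeta> n \<psi> = counit G n \<psi>" if psi: "\<psi> \<in> Hn G Cl n" for n \<psi>
  proof -
    have "conv G \<iota> \<alpha> \<alpha> \<xi>0 \<zeta> n \<psi> = (\<Sum>A\<in>Pow {1..n}. \<zeta> n \<psi> * (-1) ^ card A)"
      unfolding conv_def
    proof (rule sum.cong[OF refl])
      fix A assume A: "A \<in> Pow {1..n}"
      show "\<xi>0 (card A) (\<lambda>x. \<zeta> (n - card A) (\<lambda>y. Delta G \<iota> \<alpha> \<alpha> n A \<psi> x y)) = \<zeta> n \<psi> * (-1) ^ card A"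
        unfolding \<xi>0_def using MC'[of A n \<psi>] A psi by simp
    qed
    also have "\<dots> = \<zeta> n \<psi> * (\<Sum>A\<in>Pow {1..n}. (-1::complex) ^ card A)"
      by (simp add: sum_distrib_left)
    also have "\<dots> = \<zeta> n \<psi> * (if n = 0 then 1 else 0)"
      unfolding altn ..
    also have "\<dots> = counit G n \<psi>"
      using z0 psi by (cases "n = 0") (auto simp: counit_def)
    finally show ?thesis .
  qed
  let ?P = "\<lambda>\<xi>. graded_functional G Cl \<xi> \<and>
     (\<forall>n. \<forall>\<psi>\<in>Hn G Cl n. conv G \<iota> \<alpha> \<alpha> \<zeta> \<xi> n \<psi> = counit G n \<psi> \<and>
                         conv G \<iota> \<alpha> \<alpha> \<xi> \<zeta> n \<psi> = counit G n \<psi>)"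
  have P0: "?P \<xi>0" using gf0 conv1 conv2 by blast
  have split: "conv G \<iota> \<alpha> \<alpha> \<zeta> \<xi> n f = \<xi> n f +
      (\<Sum>A\<in>Pow {1..n} - {{}}. \<zeta> (card A) (\<lambda>x. \<xi> (n - card A) (\<lambda>y. Delta G \<iota> \<alpha> \<alpha> n A f x y)))"
    if g: "graded_functional G Cl \<xi>" and f: "f \<in> Hn G Cl n" for \<xi> n f
  proof -
    let ?F = "\<lambda>x. \<xi> n (\<lambda>y. Delta G \<iota> \<alpha> \<alpha> n {} f x y)"
    have out: "?F x = 0" if "x \<notin> tup G 0" for x
    proof -
      have "(\<lambda>y. Delta G \<iota> \<alpha> \<alpha> n {} f x y) = (\<lambda>_. 0)"
        using Delta_out[OF fin part iota alpha, of x "{}"] that by auto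
      then show ?thesis using graded_zero[OF g] by simp
    qed
    have FH: "?F \<in> Hn G Cl 0" unfolding Hn_def using out by (auto simp: tup0)
    have e: "(\<lambda>y. Delta G \<iota> \<alpha> \<alpha> n {} f (\<lambda>_. \<one>\<^bsub>G\<^esub>) y) = f"
      using Delta_empty[OF f] by auto
    have t0: "\<zeta> (card {}) ?F = \<xi> n f"
      unfolding \<zeta>_def using alpha_char0[OF FH] e by simp
    have "conv G \<iota> \<alpha> \<alpha> \<zeta> \<xi> n f = \<zeta> (card {}) ?F +
      (\<Sum>A\<in>Pow {1..n} - {{}}. \<zeta> (card A) (\<lambda>x. \<xi> (n - card A) (\<lambda>y. Delta G \<iota> \<alpha> \<alpha> n A f x y)))"
      unfolding conv_def by (subst sum.remove[of _ "{}"]) auto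
    then show ?thesis using t0 by simp
  qed
  have uniq: "\<xi> = \<xi>0" if P: "?P \<xi>" for \<xi>
  proof -
    have g: "graded_functional G Cl \<xi>" using P by blast
    have "\<forall>f. \<xi> n f = \<xi>0 n f" for n
    proof (induction n rule: less_induct)
      case (less n)
      show ?case
      proof
        fix f
        show "\<xi> n f = \<xi>0 n f"
        proof (cases "f \<in> Hn G Cl n")
          case False
          then show ?thesis using g gf0 unfolding graded_functional_def by auto
        next
          case True
          have R: "(\<Sum>A\<in>Pow {1..n} - {{}}. \<zeta> (card A) (\<lambda>x. \<xi> (n - card A) (\<lambda>y. Delta G \<iota> \<alpha> \<alpha> n A f x y))) =
             (\<Sum>A\<in>Pow {1..n} - {{}}. \<zeta> (card A) (\<lambda>x. \<xi>0 (n - card A) (\<lambda>y. Delta G \<iota> \<alpha> \<alpha> n A f x y)))"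
          proof (rule sum.cong[OF refl])
            fix A assume A: "A \<in> Pow {1..n} - {{}}"
            then have "finite A" "A \<noteq> {}" using finite_subset[of A "{1..n}"] by auto
            then have "card A > 0" by (simp add: card_gt_0_iff)
            moreover have "card A \<le> n" using A card_mono[OF fP[of n]] by fastforce
            ultimately have lt: "n - card A < n" by simp
            show "\<zeta> (card A) (\<lambda>x. \<xi> (n - card A) (\<lambda>y. Delta G \<iota> \<alpha> \<alpha> n A f x y)) =
                  \<zeta> (card A) (\<lambda>x. \<xi>0 (n - card A) (\<lambda>y. Delta G \<iota> \<alpha> \<alpha> n A f x y))"
              using less.IH[OF lt] by simp
          qed
          define S where "S = (\<Sum>A\<in>Pow {1..n} - {{}}. \<zeta> (card A) (\<lambda>x. \<xi> (n - card A) (\<lambda>y. Delta G \<iota> \<alpha> \<alpha> n A f x y)))"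
          define S0 where "S0 = (\<Sum>A\<in>Pow {1..n} - {{}}. \<zeta> (card A) (\<lambda>x. \<xi>0 (n - card A) (\<lambda>y. Delta G \<iota> \<alpha> \<alpha> n A f x y)))"
          have h1: "\<xi> n f + S = counit G n f" unfolding S_def using split[OF g True] P True by auto
          have h2: "\<xi>0 n f + S0 = counit G n f" unfolding S0_def using split[OF gf0 True] conv1[OF True] by auto
          have "S = S0" unfolding S_def S0_def by (rule R)
          then have "\<xi> n f + S0 = \<xi>0 n f + S0" using h1 h2 by simp
          then show ?thesis by simp
        qed
      qed
    qed
    then show ?thesis by blast
  qed
  have "conv_inv G Cl \<iota> \<alpha> \<alpha> (alpha_char G Cl \<alpha>) = \<xi>0"
    unfolding conv_inv_def \<zeta>_def[symmetric]
    by (rule the_equality) (use P0 uniq in blast)+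
  then show ?thesis by (simp add: \<xi>0_def \<zeta>_def)
qed


end
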